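(* Let $n\ge 2$, $c\ge 4$, $\Delta>0$, $d\le n$, and let $\hat V$ be a family of at most $n$ vectors in $\mathbb{R}^d$ such that every vertex has expected degree at most $c$ in $G\sim\mathcal{G}_{\hat V}$ and the expected number of triangles in $G\sim\mathcal{G}_{\hat V}$ is at least $\Delta n$. Assume moreover that $10c^3d\le \Delta n/\lg^2 n$ and $\Delta n/\lg^2 n+4\le \Delta n/2$. Let $V'\subseteq \hat V$ be the subfamily of vectors whose Euclidean length lies in $[n^{-2},2\sqrt n]$. Then every vertex has expected degree at most $c$ in $G\sim\mathcal{G}_{V'}$, and the expected number of triangles in $G\sim\mathcal{G}_{V'}$ is at least $\Delta n/2$.
   Context: For a finite family of vectors $W=(\vec w_i)_{i\in I}$ in $\mathbb{R}^d$, $\mathcal{G}_W$ is the distribution on simple undirected graphs with vertex set $I$ in which, independently for each unordered pair $\{i,j\}$ with $i\neq j$, the edge $(i,j)$ is present with probability $\max(0,\min(\vec w_i\cdot\vec w_j,1))$. The expected degree of $i$ is $\sum_{j\ne i}\max(0,\min(\vec w_i\cdot\vec w_j,1))$. A triangle is a set of three distinct pairwise adjacent vertices. $\lg$ is the base-2 logarithm. *)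

theory Defs
  imports "HOL-Analysis.Analysis" "HOL-Probability.Probability"
begin

definition edge_prob :: "('i \<Rightarrow> real ^ 'd) \<Rightarrow> 'i \<Rightarrow> 'i \<Rightarrow> real" where
  "edge_prob W i j = max 0 (min (inner (W i) (W j)) 1)"

definition upairs :: "'i set \<Rightarrow> 'i set set" where
  "upairs I = {{i, j} | i j. i \<in> I \<and> j \<in> I \<and> i \<noteq> j}"

text \<open>The random graph G_W on vertex set I: an edge indicator function on unordered pairs,
  each pair {i,j} present independently with probability edge_prob W i j.\<close>
definition rand_graph :: "'i set \<Rightarrow> ('i \<Rightarrow> real ^ 'd) \<Rightarrow> ('i set \<Rightarrow> bool) pmf" where
  "rand_graph I W = Pi_pmf (upairs I) False
     (\<lambda>e. bernoulli_pmf (edge_prob W (SOME i. i \<in> e) (SOME j. j \<in> e \<and> j \<noteq> (SOME i. i \<in> e))))"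

definition degree :: "'i set \<Rightarrow> ('i set \<Rightarrow> bool) \<Rightarrow> 'i \<Rightarrow> nat" where
  "degree I E i = card {j \<in> I. j \<noteq> i \<and> E {i, j}}"

definition triangles :: "'i set \<Rightarrow> ('i set \<Rightarrow> bool) \<Rightarrow> 'i set set" where
  "triangles I E = {T. T \<subseteq> I \<and> card T = 3 \<and> (\<forall>x\<in>T. \<forall>y\<in>T. x \<noteq> y \<longrightarrow> E {x, y})}"

definition expected_degree :: "'i set \<Rightarrow> ('i \<Rightarrow> real ^ 'd) \<Rightarrow> 'i \<Rightarrow> real" where
  "expected_degree I W i = measure_pmf.expectation (rand_graph I W) (\<lambda>E. real (degree I E i))"

definition expected_triangles :: "'i set \<Rightarrow> ('i \<Rightarrow> real ^ 'd) \<Rightarrow> real" where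
  "expected_triangles I W = measure_pmf.expectation (rand_graph I W) (\<lambda>E. real (card (triangles I E)))"

end

theory Submission
  imports Defs
begin


definition pe :: "('i \<Rightarrow> real ^ 'd) \<Rightarrow> 'i set \<Rightarrow> real" where
  "pe W e = edge_prob W (SOME i. i \<in> e) (SOME j. j \<in> e \<and> j \<noteq> (SOME i. i \<in> e))"

lemma edge_prob_sym: "edge_prob W i j = edge_prob W j i"
  by (simp add: edge_prob_def inner_commute)

lemma edge_prob_nonneg: "0 \<le> edge_prob W i j" and edge_prob_le1: "edge_prob W i j \<le> 1"
  by (auto simp: edge_prob_def)

lemma pe_pair: assumes "i \<noteq> j" shows "pe W {i,j} = edge_prob W i j"
proof -
  have s: "(SOME x. x \<in> {i,j}) \<in> {i,j}" by (rule someI) auto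
  show ?thesis
  proof (cases "(SOME x. x \<in> {i,j}) = i")
    case True
    have "(SOME y. y \<in> {i,j} \<and> y \<noteq> i) = j"
      by (rule some_equality) (use assms in auto)
    then show ?thesis using True by (simp add: pe_def)
  next
    case False
    then have F: "(SOME x. x \<in> {i,j}) = j" using s by auto
    have "(SOME y. y \<in> {i,j} \<and> y \<noteq> j) = i"
      by (rule some_equality) (use assms in auto)
    then show ?thesis using F by (simp add: pe_def edge_prob_sym)
  qed
qed

lemma rand_graph_alt: "rand_graph I W = Pi_pmf (upairs I) False (\<lambda>e. bernoulli_pmf (pe W e))"
  by (simp add: rand_graph_def pe_def)

lemma finite_upairs: "finite I \<Longrightarrow> finite (upairs I)"
proof -
  assume "finite I"
  have "upairs I \<subseteq> (\<lambda>(i,j). {i,j}) ` (I \<times> I)" by (auto simp: upairs_def)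
  then show ?thesis using \<open>finite I\<close> by (meson finite_SigmaI finite_imageI finite_subset)
qed

lemma pe_range: "0 \<le> pe W e" "pe W e \<le> 1"
  by (auto simp: pe_def edge_prob_def)

lemma expect_prod_edges:
  assumes "finite I" "F \<subseteq> upairs I"
  shows "measure_pmf.expectation (rand_graph I W) (\<lambda>E. \<Prod>e\<in>F. if E e then 1 else 0) = (\<Prod>e\<in>F. pe W e)"
proof -
  define f where "f = (\<lambda>x (y::bool). if x \<in> F then (if y then 1 else 0) else (1::real))"
  have fin: "finite (upairs I)" using assms finite_upairs by blast
  have "(\<lambda>E. \<Prod>e\<in>F. if E e then 1 else (0::real)) = (\<lambda>E. \<Prod>x\<in>upairs I. f x (E x))"
  proof
    fix E :: "'a set \<Rightarrow> bool"
    have "(\<Prod>x\<in>upairs I. f x (E x)) = (\<Prod>x\<in>F. f x (E x))"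
      by (rule prod.mono_neutral_right[OF fin assms(2)]) (auto simp: f_def)
    then show "(\<Prod>e\<in>F. if E e then 1 else (0::real)) = (\<Prod>x\<in>upairs I. f x (E x))"
      by (simp add: f_def)
  qed
  then have "measure_pmf.expectation (rand_graph I W) (\<lambda>E. \<Prod>e\<in>F. if E e then 1 else 0)
     = measure_pmf.expectation (Pi_pmf (upairs I) False (\<lambda>e. bernoulli_pmf (pe W e))) (\<lambda>E. \<Prod>x\<in>upairs I. f x (E x))"
    by (simp add: rand_graph_alt)
  also have "\<dots> = (\<Prod>x\<in>upairs I. measure_pmf.expectation (bernoulli_pmf (pe W x)) (f x))"
    by (rule expectation_prod_Pi_pmf[OF fin]) (auto simp: f_def integrable_measure_pmf_finite)
  also have "\<dots> = (\<Prod>x\<in>upairs I. if x \<in> F then pe W x else 1)"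
    by (rule prod.cong) (auto simp: f_def pe_range)
  also have "\<dots> = (\<Prod>e\<in>F. pe W e)"
    using prod.mono_neutral_right[OF fin assms(2), of "\<lambda>x. if x \<in> F then pe W x else 1"]
    by (simp add: prod.If_cases)
  finally show ?thesis .
qed



lemma integrable_bdd: "(\<And>x. \<bar>f x\<bar> \<le> (B::real)) \<Longrightarrow> integrable (measure_pmf p) f"
  by (rule measure_pmf.integrable_const_bound[where B=B]) auto

lemma expected_degree_eq:
  assumes "finite I" "i \<in> I"
  shows "expected_degree I W i = (\<Sum>j\<in>I-{i}. edge_prob W i j)"
proof -
  have deg: "real (degree I E i) = (\<Sum>j\<in>I-{i}. if E {i,j} then 1 else 0)" for E
  proof -
    have "{j \<in> I. j \<noteq> i \<and> E {i, j}} = {j \<in> I-{i}. E {i,j}}" by auto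
    then have "real (degree I E i) = real (card {j \<in> I-{i}. E {i,j}})" by (simp add: degree_def)
    also have "\<dots> = (\<Sum>j\<in>{j \<in> I-{i}. E {i,j}}. 1)" by simp
    also have "\<dots> = (\<Sum>j\<in>I-{i}. if E {i,j} then 1 else 0)"
      by (rule sum.inter_filter) (use assms in auto)
    finally show ?thesis .
  qed
  have "expected_degree I W i = measure_pmf.expectation (rand_graph I W) (\<lambda>E. \<Sum>j\<in>I-{i}. if E {i,j} then 1 else 0)"
    by (simp add: expected_degree_def deg)
  also have "\<dots> = (\<Sum>j\<in>I-{i}. measure_pmf.expectation (rand_graph I W) (\<lambda>E. if E {i,j} then 1 else 0))"
    by (rule Bochner_Integration.integral_sum) (rule integrable_bdd[where B=1], auto)
  also have "\<dots> = (\<Sum>j\<in>I-{i}. edge_prob W i j)"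
  proof (rule sum.cong[OF refl])
    fix j assume j: "j \<in> I - {i}"
    have "{{i,j}} \<subseteq> upairs I" using j assms by (auto simp: upairs_def)
    from expect_prod_edges[OF assms(1) this, of W] j
    show "measure_pmf.expectation (rand_graph I W) (\<lambda>E. if E {i,j} then 1 else 0) = edge_prob W i j"
      using pe_pair[of i j W] by auto
  qed
  finally show ?thesis .
qed

definition Tr3 :: "'i set \<Rightarrow> 'i set set" where "Tr3 I = {T. T \<subseteq> I \<and> card T = 3}"
definition edges :: "'i set \<Rightarrow> 'i set set" where "edges T = {e. e \<subseteq> T \<and> card e = 2}"
definition tp :: "('i \<Rightarrow> real ^ 'd) \<Rightarrow> 'i set \<Rightarrow> real" where "tp W T = (\<Prod>e\<in>edges T. pe W e)"

lemma finite_Tr3: "finite I \<Longrightarrow> finite (Tr3 I)"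
  by (rule finite_subset[of _ "Pow I"]) (auto simp: Tr3_def)

lemma finite_edges: "finite T \<Longrightarrow> finite (edges T)"
  by (rule finite_subset[of _ "Pow T"]) (auto simp: edges_def)

lemma edges_sub: "T \<subseteq> I \<Longrightarrow> edges T \<subseteq> upairs I"
  by (auto simp: edges_def upairs_def card_2_iff)

lemma tri_iff: "(\<forall>x\<in>T. \<forall>y\<in>T. x \<noteq> y \<longrightarrow> E {x, y}) \<longleftrightarrow> (\<forall>e\<in>edges T. E e)"
proof
  assume "\<forall>e\<in>edges T. E e"
  then show "\<forall>x\<in>T. \<forall>y\<in>T. x \<noteq> y \<longrightarrow> E {x, y}" by (auto simp: edges_def)
qed (auto simp: edges_def card_2_iff)

lemma prod_ind: "finite A \<Longrightarrow> (\<Prod>e\<in>A. if E e then 1 else (0::real)) = (if \<forall>e\<in>A. E e then 1 else 0)"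
  by (induct rule: finite_induct) auto

lemma expected_triangles_eq:
  assumes "finite I"
  shows "expected_triangles I W = (\<Sum>T\<in>Tr3 I. tp W T)"
proof -
  have cnt: "real (card (triangles I E)) = (\<Sum>T\<in>Tr3 I. \<Prod>e\<in>edges T. if E e then 1 else 0)" for E
  proof -
    have "triangles I E = {T\<in>Tr3 I. \<forall>e\<in>edges T. E e}"
      by (auto simp: triangles_def Tr3_def tri_iff)
    then have "real (card (triangles I E)) = (\<Sum>T\<in>{T\<in>Tr3 I. \<forall>e\<in>edges T. E e}. 1)" by simp
    also have "\<dots> = (\<Sum>T\<in>Tr3 I. if (\<forall>e\<in>edges T. E e) then 1 else 0)"
      by (rule sum.inter_filter) (use assms finite_Tr3 in auto)
    also have "\<dots> = (\<Sum>T\<in>Tr3 I. \<Prod>e\<in>edges T. if E e then 1 else 0)"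
    proof (rule sum.cong[OF refl])
      fix T assume "T \<in> Tr3 I"
      then have "finite T" using finite_subset[OF _ assms] by (auto simp: Tr3_def)
      then show "(if (\<forall>e\<in>edges T. E e) then 1 else 0) = (\<Prod>e\<in>edges T. if E e then 1 else (0::real))"
        by (simp add: prod_ind finite_edges)
    qed
    finally show ?thesis .
  qed
  have "expected_triangles I W = measure_pmf.expectation (rand_graph I W) (\<lambda>E. \<Sum>T\<in>Tr3 I. \<Prod>e\<in>edges T. if E e then 1 else 0)"
    by (simp add: expected_triangles_def cnt)
  also have "\<dots> = (\<Sum>T\<in>Tr3 I. measure_pmf.expectation (rand_graph I W) (\<lambda>E. \<Prod>e\<in>edges T. if E e then 1 else 0))"
    by (rule Bochner_Integration.integral_sum) (rule integrable_bdd[where B=1], auto simp: abs_prod intro!: prod_le_1)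
  also have "\<dots> = (\<Sum>T\<in>Tr3 I. tp W T)"
    by (rule sum.cong[OF refl]) (auto simp: tp_def Tr3_def intro!: expect_prod_edges[OF assms] edges_sub)
  finally show ?thesis .
qed

lemma tp_eq:
  assumes "a \<noteq> b" "a \<noteq> c" "b \<noteq> c"
  shows "tp W {a,b,c} = edge_prob W a b * edge_prob W a c * edge_prob W b c"
proof -
  have "edges {a,b,c} = {{a,b},{a,c},{b,c}}"
  proof
    show "edges {a,b,c} \<subseteq> {{a,b},{a,c},{b,c}}"
      by (auto simp: edges_def card_2_iff doubleton_eq_iff)
    show "{{a,b},{a,c},{b,c}} \<subseteq> edges {a,b,c}" using assms by (auto simp: edges_def)
  qed
  moreover have "{a,b} \<noteq> {a,c}" "{a,b} \<noteq> {b,c}" "{a,c} \<noteq> {b,c}" using assms by (auto simp: doubleton_eq_iff)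
  ultimately show ?thesis using assms by (simp add: tp_def pe_pair)
qed

lemma tp_nonneg: "0 \<le> tp W T"
  by (simp add: tp_def prod_nonneg pe_range)



lemma cs_sum:
  fixes s :: "'d::finite \<Rightarrow> real"
  shows "(\<Sum>k\<in>UNIV. s k)\<^sup>2 \<le> real CARD('d) * (\<Sum>k\<in>UNIV. (s k)\<^sup>2)"
proof -
  define u :: "real^'d" where "u = (\<chi> k. s k)"
  define one :: "real^'d" where "one = (\<chi> k. 1)"
  have "(inner u one)\<^sup>2 \<le> inner u u * inner one one" by (rule Cauchy_Schwarz_ineq)
  moreover have "inner u one = (\<Sum>k\<in>UNIV. s k)" by (simp add: inner_vec_def u_def one_def)
  moreover have "inner u u = (\<Sum>k\<in>UNIV. (s k)\<^sup>2)" by (simp add: inner_vec_def u_def power2_eq_square)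
  moreover have "inner one one = real CARD('d)" by (simp add: inner_vec_def one_def)
  ultimately show ?thesis by (simp add: mult.commute)
qed

lemma sum4_swap: "(\<Sum>i\<in>A. \<Sum>j\<in>B. \<Sum>k\<in>C. \<Sum>l\<in>D. f i j k l) = (\<Sum>k\<in>C. \<Sum>l\<in>D. \<Sum>i\<in>A. \<Sum>j\<in>B. f i j k l)"
proof -
  have "(\<Sum>i\<in>A. \<Sum>j\<in>B. \<Sum>k\<in>C. \<Sum>l\<in>D. f i j k l) = (\<Sum>i\<in>A. \<Sum>k\<in>C. \<Sum>j\<in>B. \<Sum>l\<in>D. f i j k l)"
    by (rule sum.cong[OF refl], rule sum.swap)
  also have "\<dots> = (\<Sum>i\<in>A. \<Sum>k\<in>C. \<Sum>l\<in>D. \<Sum>j\<in>B. f i j k l)"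
    by (rule sum.cong[OF refl], rule sum.cong[OF refl], rule sum.swap)
  also have "\<dots> = (\<Sum>k\<in>C. \<Sum>i\<in>A. \<Sum>l\<in>D. \<Sum>j\<in>B. f i j k l)"
    by (rule sum.swap)
  also have "\<dots> = (\<Sum>k\<in>C. \<Sum>l\<in>D. \<Sum>i\<in>A. \<Sum>j\<in>B. f i j k l)"
    by (rule sum.cong[OF refl], rule sum.swap)
  finally show ?thesis .
qed

lemma trace_ineq:
  fixes x :: "'i \<Rightarrow> real^'d"
  shows "(\<Sum>i\<in>L. inner (x i) (x i))\<^sup>2 \<le> real CARD('d) * (\<Sum>i\<in>L. \<Sum>j\<in>L. (inner (x i) (x j))\<^sup>2)"
proof -
  define S where "S k l = (\<Sum>i\<in>L. x i $ k * x i $ l)" for k l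
  have a: "(\<Sum>i\<in>L. inner (x i) (x i)) = (\<Sum>k\<in>UNIV. S k k)"
    unfolding S_def inner_vec_def inner_real_def by (rule sum.swap)
  have "(\<Sum>i\<in>L. \<Sum>j\<in>L. (inner (x i) (x j))\<^sup>2)
      = (\<Sum>i\<in>L. \<Sum>j\<in>L. \<Sum>k\<in>UNIV. \<Sum>l\<in>UNIV. (x i $ k * x i $ l) * (x j $ k * x j $ l))"
    by (simp add: inner_vec_def power2_eq_square sum_product mult_ac)
  also have "\<dots> = (\<Sum>k\<in>UNIV. \<Sum>l\<in>UNIV. \<Sum>i\<in>L. \<Sum>j\<in>L. (x i $ k * x i $ l) * (x j $ k * x j $ l))"
    by (rule sum4_swap)
  also have "\<dots> = (\<Sum>k\<in>UNIV. \<Sum>l\<in>UNIV. (S k l)\<^sup>2)"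
    by (simp add: S_def power2_eq_square sum_product)
  finally have b: "(\<Sum>i\<in>L. \<Sum>j\<in>L. (inner (x i) (x j))\<^sup>2) = (\<Sum>k\<in>UNIV. \<Sum>l\<in>UNIV. (S k l)\<^sup>2)" .
  have "(\<Sum>k\<in>UNIV. (S k k)\<^sup>2) \<le> (\<Sum>k\<in>UNIV. \<Sum>l\<in>UNIV. (S k l)\<^sup>2)"
  proof (rule sum_mono)
    fix k :: 'd
    show "(S k k)\<^sup>2 \<le> (\<Sum>l\<in>UNIV. (S k l)\<^sup>2)"
      using member_le_sum[of k UNIV "\<lambda>l. (S k l)\<^sup>2"] by simp
  qed
  then show ?thesis using cs_sum[of "\<lambda>k. S k k"] a b
    by (metis (no_types, lifting) mult_left_mono of_nat_0_le_iff order_trans)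
qed



lemma long_count:
  fixes V :: "'i \<Rightarrow> real^'d" and n :: nat and c :: real
  assumes fin: "finite I" and LI: "L \<subseteq> I" and long: "\<And>i. i \<in> L \<Longrightarrow> norm (V i) > 2 * sqrt (real n)"
    and cI: "card I \<le> n" and n0: "n > 0"
    and c0: "c \<ge> 0" and deg: "\<And>i. i \<in> I \<Longrightarrow> (\<Sum>j\<in>I-{i}. edge_prob V i j) \<le> c"
  shows "real (card L) \<le> real CARD('d) * (5/2 + 2 * c)"
proof -
  define m where "m = card L"
  have finL: "finite L" using fin LI finite_subset by blast
  define x where "x i = (1 / norm (V i)) *\<^sub>R V i" for i
  define G where "G i j = inner (x i) (x j)" for i j
  have npos: "norm (V i) > 0" if "i \<in> L" for i
    using long[OF that] real_sqrt_ge_zero[of "real n"] by linarith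
  have Gdef: "G i j = inner (V i) (V j) / (norm (V i) * norm (V j))" for i j
    by (simp add: G_def x_def)
  have Gabs: "\<bar>G i j\<bar> \<le> 1" if "i \<in> L" "j \<in> L" for i j
  proof -
    have "\<bar>inner (V i) (V j)\<bar> \<le> norm (V i) * norm (V j)" by (rule Cauchy_Schwarz_ineq2)
    moreover have d: "norm (V i) * norm (V j) > 0" using npos[OF that(1)] npos[OF that(2)] by simp
    moreover have "\<bar>G i j\<bar> = \<bar>inner (V i) (V j)\<bar> / (norm (V i) * norm (V j))"
      using d by (simp add: Gdef)
    ultimately show ?thesis by (simp add: divide_le_eq)
  qed
  have Gii: "G i i = 1" if "i \<in> L" for i
    proof -
    have "norm (V i) * norm (V i) \<noteq> 0" using npos[OF that] by simp
    then show ?thesis by (simp add: Gdef dot_square_norm power2_eq_square)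
  qed
  have trace: "(\<Sum>i\<in>L. G i i) = real m" by (simp add: Gii m_def)
  have sumG: "(\<Sum>i\<in>L. \<Sum>j\<in>L. G i j) \<ge> 0"
  proof -
    have "(\<Sum>i\<in>L. \<Sum>j\<in>L. G i j) = inner (\<Sum>i\<in>L. x i) (\<Sum>j\<in>L. x j)"
      by (simp add: G_def inner_sum_left inner_sum_right) (rule sum.swap)
    then show ?thesis by simp
  qed
  have pos_bound: "max 0 (G i j) \<le> edge_prob V i j + 1 / (4 * real n)" if "i \<in> L" "j \<in> L" "i \<noteq> j" for i j
  proof (cases "inner (V i) (V j) \<ge> 1")
    case True
    then have "edge_prob V i j = 1" by (simp add: edge_prob_def)
    moreover have "0 \<le> 1 / (4 * real n)" by simp
    moreover have "G i j \<le> 1" using Gabs[OF that(1,2)] by (simp add: abs_le_iff)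
    ultimately show ?thesis by (intro max.boundedI) linarith+
  next
    case False
    have prod: "norm (V i) * norm (V j) > 4 * real n"
    proof -
      have "2 * sqrt (real n) * (2 * sqrt (real n)) < norm (V i) * norm (V j)"
        using long[OF that(1)] long[OF that(2)]
        by (intro mult_strict_mono) auto
      then show ?thesis by simp
    qed
    have "G i j \<le> 1 / (norm (V i) * norm (V j))"
      unfolding Gdef using False prod by (intro divide_right_mono) auto
    moreover have "0 \<le> 1 / (norm (V i) * norm (V j))" using prod by simp
    ultimately have "max 0 (G i j) \<le> 1 / (norm (V i) * norm (V j))" by simp
    also have "\<dots> \<le> 1 / (4 * real n)"
      using prod n0 by (intro divide_left_mono) auto
    finally show ?thesis using edge_prob_nonneg[of V i j] by linarith
  qed
  have mn: "real m \<le> real n" using card_mono[OF fin LI] cI by (simp add: m_def)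
  have row: "(\<Sum>j\<in>L. max 0 (G i j)) \<le> 5/4 + c" if iL: "i \<in> L" for i
  proof -
    have "(\<Sum>j\<in>L. max 0 (G i j)) = max 0 (G i i) + (\<Sum>j\<in>L-{i}. max 0 (G i j))"
      using iL finL by (simp add: sum.remove)
    also have "\<dots> \<le> 1 + (\<Sum>j\<in>L-{i}. edge_prob V i j + 1 / (4 * real n))"
      using Gii[OF iL] pos_bound[OF iL] by (intro add_mono sum_mono) auto
    also have "\<dots> = 1 + (\<Sum>j\<in>L-{i}. edge_prob V i j) + real (card (L-{i})) / (4 * real n)"
      by (simp add: sum.distrib)
    also have "\<dots> \<le> 1 + c + 1/4"
    proof -
      have "(\<Sum>j\<in>L-{i}. edge_prob V i j) \<le> (\<Sum>j\<in>I-{i}. edge_prob V i j)"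
        using fin LI by (intro sum_mono2) (auto simp: edge_prob_nonneg)
      also have "\<dots> \<le> c" using deg LI iL by auto
      finally have A: "(\<Sum>j\<in>L-{i}. edge_prob V i j) \<le> c" .
      have "real (card (L-{i})) \<le> real m" by (simp add: m_def card_mono finL)
      then have "real (card (L-{i})) / (4 * real n) \<le> 1/4"
        using mn n0 by (simp add: divide_le_eq)
      then show ?thesis using A by linarith
    qed
    finally show ?thesis by simp
  qed
  have "(\<Sum>i\<in>L. \<Sum>j\<in>L. (G i j)\<^sup>2) \<le> (\<Sum>i\<in>L. \<Sum>j\<in>L. \<bar>G i j\<bar>)"
  proof (intro sum_mono)
    fix i j assume "i \<in> L" "j \<in> L"
    then have "\<bar>G i j\<bar> \<le> 1" by (rule Gabs)
    then show "(G i j)\<^sup>2 \<le> \<bar>G i j\<bar>"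
      by (metis abs_ge_zero abs_mult_self_eq mult_left_le power2_eq_square)
  qed
  also have "\<dots> = (\<Sum>i\<in>L. \<Sum>j\<in>L. 2 * max 0 (G i j) - G i j)"
    by (intro sum.cong refl) (auto simp: max_def abs_if)
  also have "\<dots> = 2 * (\<Sum>i\<in>L. \<Sum>j\<in>L. max 0 (G i j)) - (\<Sum>i\<in>L. \<Sum>j\<in>L. G i j)"
    by (simp add: sum_subtractf sum_distrib_left)
  also have "\<dots> \<le> 2 * (\<Sum>i\<in>L. (5/4 + c))"
    using sumG row by (smt (verit) sum_mono)
  also have "\<dots> = real m * (5/2 + 2 * c)" by (simp add: m_def algebra_simps)
  finally have sq: "(\<Sum>i\<in>L. \<Sum>j\<in>L. (G i j)\<^sup>2) \<le> real m * (5/2 + 2 * c)" .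
  have "(real m)\<^sup>2 \<le> real CARD('d) * (\<Sum>i\<in>L. \<Sum>j\<in>L. (G i j)\<^sup>2)"
    using trace_ineq[of x L] trace unfolding G_def by simp
  also have "\<dots> \<le> real CARD('d) * (real m * (5/2 + 2 * c))"
    by (intro mult_left_mono sq) auto
  finally have "real m * real m \<le> real m * (real CARD('d) * (5/2 + 2 * c))"
    by (simp add: power2_eq_square mult_ac)
  then show ?thesis
    by (cases "m = 0") (use c0 in \<open>auto simp: m_def[symmetric] mult_le_cancel_left\<close>)
qed



lemma Tr3_contains:
  assumes "T \<in> Tr3 I" "i \<in> T"
  obtains j k where "T = {i,j,k}" "j \<noteq> k" "i \<noteq> j" "i \<noteq> k" "j \<in> I" "k \<in> I" "i \<in> I"
proof -
  have fT: "finite T" using assms(1) by (auto simp: Tr3_def intro: card_ge_0_finite)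
  have "card (T - {i}) = 2" using assms fT by (auto simp: Tr3_def card_Diff_singleton)
  then obtain j k where jk: "T - {i} = {j,k}" "j \<noteq> k" by (auto simp: card_2_iff)
  then have "T = {i,j,k}" using assms(2) by auto
  moreover have "i \<noteq> j" "i \<noteq> k" using jk by auto
  moreover have "j \<in> I" "k \<in> I" "i \<in> I" using assms jk by (auto simp: Tr3_def)
  ultimately show ?thesis using that jk by blast
qed

lemma tri_through:
  fixes V :: "'i \<Rightarrow> real^'d"
  assumes fin: "finite I" and iI: "i \<in> I" and c0: "c \<ge> 0"
    and deg: "\<And>j. j \<in> I \<Longrightarrow> (\<Sum>k\<in>I-{j}. edge_prob V j k) \<le> c"
  shows "(\<Sum>T\<in>{T\<in>Tr3 I. i \<in> T}. tp V T) \<le> c\<^sup>2"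
proof -
  define B where "B = Sigma (I-{i}) (\<lambda>j. I-{i,j})"
  define h where "h = (\<lambda>(j,k). {i,j,k})"
  have finB: "finite B" using fin by (auto simp: B_def)
  have sub: "{T\<in>Tr3 I. i \<in> T} \<subseteq> h ` B"
  proof
    fix T assume "T \<in> {T\<in>Tr3 I. i \<in> T}"
    then have "T \<in> Tr3 I" "i \<in> T" by auto
    then obtain j k where "T = {i,j,k}" "j \<noteq> k" "i \<noteq> j" "i \<noteq> k" "j \<in> I" "k \<in> I"
      by (rule Tr3_contains)
    then show "T \<in> h ` B" unfolding h_def B_def by (intro image_eqI[of _ _ "(j,k)"]) auto
  qed
  have "(\<Sum>T\<in>{T\<in>Tr3 I. i \<in> T}. tp V T) \<le> (\<Sum>T\<in>h ` B. tp V T)"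
    using finB sub by (intro sum_mono2) (auto simp: tp_nonneg)
  also have "\<dots> \<le> (\<Sum>b\<in>B. tp V (h b))"
    using sum_image_le[OF finB, of "tp V" h] by (simp add: tp_nonneg o_def)
  also have "\<dots> = (\<Sum>j\<in>I-{i}. \<Sum>k\<in>I-{i,j}. tp V {i,j,k})"
    unfolding B_def h_def using fin by (subst sum.Sigma) (auto intro!: sum.cong simp: split_beta)
  also have "\<dots> \<le> (\<Sum>j\<in>I-{i}. \<Sum>k\<in>I-{i,j}. edge_prob V i j * edge_prob V j k)"
  proof (intro sum_mono)
    fix j k assume j: "j \<in> I - {i}" and k: "k \<in> I - {i,j}"
    then have "tp V {i,j,k} = edge_prob V i j * edge_prob V i k * edge_prob V j k"
      by (intro tp_eq) auto
    also have "\<dots> \<le> edge_prob V i j * 1 * edge_prob V j k"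
      by (intro mult_right_mono mult_left_mono edge_prob_le1 edge_prob_nonneg)
    finally show "tp V {i,j,k} \<le> edge_prob V i j * edge_prob V j k" by simp
  qed
  also have "\<dots> \<le> (\<Sum>j\<in>I-{i}. edge_prob V i j * c)"
  proof (intro sum_mono)
    fix j assume j: "j \<in> I - {i}"
    have "(\<Sum>k\<in>I-{i,j}. edge_prob V j k) \<le> (\<Sum>k\<in>I-{j}. edge_prob V j k)"
      using fin by (intro sum_mono2) (auto simp: edge_prob_nonneg)
    also have "\<dots> \<le> c" using deg j by auto
    finally show "(\<Sum>k\<in>I-{i,j}. edge_prob V i j * edge_prob V j k) \<le> edge_prob V i j * c"
      by (simp add: sum_distrib_left[symmetric] mult_left_mono edge_prob_nonneg)
  qed
  also have "\<dots> = (\<Sum>j\<in>I-{i}. edge_prob V i j) * c" by (simp add: sum_distrib_right)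
  also have "\<dots> \<le> c * c" using deg[OF iI] c0 by (intro mult_right_mono) auto
  finally show ?thesis by (simp add: power2_eq_square)
qed

lemma edge_prob_le_norm: "edge_prob V i j \<le> norm (V i) * norm (V j)"
proof -
  have "inner (V i) (V j) \<le> norm (V i) * norm (V j)" by (rule norm_cauchy_schwarz)
  then show ?thesis by (auto simp: edge_prob_def max_def min_def)
qed

lemma short_bound:
  fixes V :: "'i \<Rightarrow> real^'d" and n :: nat
  assumes fin: "finite I" and cI: "card I \<le> n" and n0: "n > 0"
  shows "(\<Sum>T\<in>{T\<in>Tr3 I. (\<exists>i\<in>T. norm (V i) < real n powr (-2)) \<and> (\<forall>j\<in>T. norm (V j) \<le> 2 * sqrt (real n))}. tp V T) \<le> 4"
proof -
  define S where "S = {T\<in>Tr3 I. (\<exists>i\<in>T. norm (V i) < real n powr (-2)) \<and> (\<forall>j\<in>T. norm (V j) \<le> 2 * sqrt (real n))}"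
  define a where "a = real n powr (-2) * (2 * sqrt (real n))"
  have a0: "a \<ge> 0" by (simp add: a_def)
  have asq: "a * a = 4 / real n ^ 3"
  proof -
    have "a * a = (real n powr (-2))\<^sup>2 * 4 * (sqrt (real n))\<^sup>2" by (simp add: a_def power2_eq_square)
    also have "(real n powr (-2))\<^sup>2 = real n powr (-4)" using n0 by (simp add: powr_powr[symmetric] powr_realpow[symmetric] powr_powr)
    also have "(sqrt (real n))\<^sup>2 = real n" by simp
    also have "real n powr (-4) = 1 / real n ^ 4" using n0 by (simp add: powr_minus powr_realpow inverse_eq_divide)
    finally show ?thesis using n0 by (simp add: power_eq_if field_simps)
  qed
  have ep: "edge_prob V i j \<le> a" if "norm (V i) < real n powr (-2)" "norm (V j) \<le> 2 * sqrt (real n)" for i j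
  proof -
    have "edge_prob V i j \<le> norm (V i) * norm (V j)" by (rule edge_prob_le_norm)
    also have "\<dots> \<le> real n powr (-2) * (2 * sqrt (real n))"
      using that by (intro mult_mono) auto
    finally show ?thesis by (simp add: a_def)
  qed
  have tpb: "tp V T \<le> 4 / real n ^ 3" if "T \<in> S" for T
  proof -
    from that obtain i where T: "T \<in> Tr3 I" "i \<in> T" "norm (V i) < real n powr (-2)"
      and all: "\<forall>j\<in>T. norm (V j) \<le> 2 * sqrt (real n)" by (auto simp: S_def)
    from T(1,2) obtain j k where jk: "T = {i,j,k}" "j \<noteq> k" "i \<noteq> j" "i \<noteq> k"
      by (rule Tr3_contains)
    have "tp V T = edge_prob V i j * edge_prob V i k * edge_prob V j k" using jk by (simp add: tp_eq)
    also have "\<dots> \<le> a * a * 1"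
      using ep[OF T(3)] all jk a0
      by (intro mult_mono edge_prob_le1 edge_prob_nonneg mult_nonneg_nonneg) auto
    finally show ?thesis using asq by simp
  qed
  have cardS: "real (card S) \<le> real n ^ 3"
  proof -
    have "card S \<le> card (Tr3 I)" using finite_Tr3[OF fin] by (intro card_mono) (auto simp: S_def)
    also have "card (Tr3 I) = card I choose 3" unfolding Tr3_def using n_subsets[OF fin] by simp
    also have "\<dots> \<le> card I ^ 3"
      by (cases "3 \<le> card I") (auto intro: binomial_le_pow simp: binomial_eq_0)
    also have "\<dots> \<le> n ^ 3" using cI by (simp add: power_mono)
    finally show ?thesis by (simp flip: of_nat_power)
  qed
  have "(\<Sum>T\<in>S. tp V T) \<le> (\<Sum>T\<in>S. 4 / real n ^ 3)" by (intro sum_mono tpb)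
  also have "\<dots> = real (card S) * (4 / real n ^ 3)" by simp
  also have "\<dots> \<le> real n ^ 3 * (4 / real n ^ 3)" by (intro mult_right_mono cardS) auto
  also have "\<dots> = 4" using n0 by simp
  finally show ?thesis unfolding S_def .
qed



theorem mainTheorem6:
  fixes I :: "'i set" and V :: "'i \<Rightarrow> real ^ 'd" and n :: nat and c \<Delta> :: real
  assumes "n \<ge> 2" and "c \<ge> 4" and "\<Delta> > 0" and "CARD('d) \<le> n"
    and "finite I" and "card I \<le> n"
    and "\<forall>i\<in>I. expected_degree I V i \<le> c"
    and "expected_triangles I V \<ge> \<Delta> * real n"
    and "10 * c ^ 3 * real CARD('d) \<le> \<Delta> * real n / (log 2 (real n))\<^sup>2"
    and "\<Delta> * real n / (log 2 (real n))\<^sup>2 + 4 \<le> \<Delta> * real n / 2"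
  shows "(\<forall>i\<in>{i\<in>I. real n powr (-2) \<le> norm (V i) \<and> norm (V i) \<le> 2 * sqrt (real n)}.
            expected_degree {i\<in>I. real n powr (-2) \<le> norm (V i) \<and> norm (V i) \<le> 2 * sqrt (real n)} V i \<le> c)
       \<and> expected_triangles {i\<in>I. real n powr (-2) \<le> norm (V i) \<and> norm (V i) \<le> 2 * sqrt (real n)} V
           \<ge> \<Delta> * real n / 2"
proof -
  define K where "K = {i\<in>I. real n powr (-2) \<le> norm (V i) \<and> norm (V i) \<le> 2 * sqrt (real n)}"
  define Lg where "Lg = {i\<in>I. norm (V i) > 2 * sqrt (real n)}"
  define S where "S = {T\<in>Tr3 I. (\<exists>i\<in>T. norm (V i) < real n powr (-2)) \<and> (\<forall>j\<in>T. norm (V j) \<le> 2 * sqrt (real n))}"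
  note fin = \<open>finite I\<close>
  have n0: "n > 0" using assms(1) by simp
  have c0: "c \<ge> 0" using assms(2) by simp
  have KI: "K \<subseteq> I" and finK: "finite K" using fin by (auto simp: K_def)
  have deg: "\<And>i. i \<in> I \<Longrightarrow> (\<Sum>j\<in>I-{i}. edge_prob V i j) \<le> c"
    using assms(7) expected_degree_eq[OF fin] by metis
  have part1: "\<forall>i\<in>K. expected_degree K V i \<le> c"
  proof
    fix i assume iK: "i \<in> K"
    have "expected_degree K V i = (\<Sum>j\<in>K-{i}. edge_prob V i j)"
      by (rule expected_degree_eq[OF finK iK])
    also have "\<dots> \<le> (\<Sum>j\<in>I-{i}. edge_prob V i j)"
      using fin KI by (intro sum_mono2) (auto simp: edge_prob_nonneg)
    also have "\<dots> \<le> c" using deg iK KI by auto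
    finally show "expected_degree K V i \<le> c" .
  qed
  have TK: "Tr3 K \<subseteq> Tr3 I" using KI by (auto simp: Tr3_def)
  define X where "X = Tr3 I - Tr3 K"
  have finX: "finite X" using finite_Tr3[OF fin] by (simp add: X_def)
  have split: "expected_triangles I V = expected_triangles K V + (\<Sum>T\<in>X. tp V T)"
    unfolding expected_triangles_eq[OF fin] expected_triangles_eq[OF finK] X_def
    using sum.subset_diff[OF TK finite_Tr3[OF fin], of "tp V"] by simp
  have ptw: "tp V T \<le> (\<Sum>i\<in>Lg. if i \<in> T then tp V T else 0) + (if T \<in> S then tp V T else 0)"
    if "T \<in> X" for T
  proof (cases "\<exists>i\<in>T. i \<in> Lg")
    case True
    then obtain i where i: "i \<in> T" "i \<in> Lg" by blast
    have finLg: "finite Lg" using fin by (simp add: Lg_def)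
    have "tp V T = (if i \<in> T then tp V T else 0)" using i by simp
    also have "\<dots> \<le> (\<Sum>i\<in>Lg. if i \<in> T then tp V T else 0)"
      using i finLg by (intro member_le_sum) (auto simp: tp_nonneg)
    moreover have "0 \<le> (if T \<in> S then tp V T else 0)" by (simp add: tp_nonneg)
    ultimately show ?thesis by linarith
  next
    case False
    have "T \<in> S"
    proof -
      have T: "T \<in> Tr3 I" "\<not> T \<subseteq> K" using that by (auto simp: X_def Tr3_def)
      then obtain x where x: "x \<in> T" "x \<notin> K" by auto
      have TI: "T \<subseteq> I" using T by (simp add: Tr3_def)
      have all: "\<forall>j\<in>T. norm (V j) \<le> 2 * sqrt (real n)"
        using False TI by (auto simp: Lg_def not_less)
      then have "norm (V x) < real n powr (-2)" using x TI by (auto simp: K_def)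
      then show ?thesis using T all x by (auto simp: S_def)
    qed
    then show ?thesis by (simp add: sum_nonneg tp_nonneg)
  qed
  have finLg: "finite Lg" using fin by (simp add: Lg_def)
  have "(\<Sum>T\<in>X. tp V T) \<le> (\<Sum>T\<in>X. (\<Sum>i\<in>Lg. if i \<in> T then tp V T else 0) + (if T \<in> S then tp V T else 0))"
    by (intro sum_mono ptw)
  also have "\<dots> = (\<Sum>i\<in>Lg. \<Sum>T\<in>X. if i \<in> T then tp V T else 0) + (\<Sum>T\<in>X. if T \<in> S then tp V T else 0)"
    by (simp add: sum.distrib sum.swap[of _ X Lg])
  also have "\<dots> \<le> (\<Sum>i\<in>Lg. c\<^sup>2) + 4"
  proof (intro add_mono sum_mono)
    fix i assume iL: "i \<in> Lg"
    have "(\<Sum>T\<in>X. if i \<in> T then tp V T else 0) = (\<Sum>T\<in>{T\<in>X. i \<in> T}. tp V T)"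
      using finX by (simp add: sum.inter_filter)
    also have "\<dots> \<le> (\<Sum>T\<in>{T\<in>Tr3 I. i \<in> T}. tp V T)"
      using finite_Tr3[OF fin] by (intro sum_mono2) (auto simp: X_def tp_nonneg)
    also have "\<dots> \<le> c\<^sup>2"
      using iL by (intro tri_through[OF fin _ c0 deg]) (auto simp: Lg_def)
    finally show "(\<Sum>T\<in>X. if i \<in> T then tp V T else 0) \<le> c\<^sup>2" .
  next
    have "(\<Sum>T\<in>X. if T \<in> S then tp V T else 0) = (\<Sum>T\<in>{T\<in>X. T \<in> S}. tp V T)"
      using finX by (simp add: sum.inter_filter)
    also have "\<dots> \<le> (\<Sum>T\<in>S. tp V T)"
      using finite_Tr3[OF fin] by (intro sum_mono2) (auto simp: S_def tp_nonneg)
    also have "\<dots> \<le> 4" unfolding S_def by (rule short_bound[OF fin assms(6) n0])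
    finally show "(\<Sum>T\<in>X. if T \<in> S then tp V T else 0) \<le> 4" .
  qed
  also have "\<dots> = real (card Lg) * c\<^sup>2 + 4" by simp
  also have "\<dots> \<le> real CARD('d) * (5/2 + 2 * c) * c\<^sup>2 + 4"
  proof -
    have "real (card Lg) \<le> real CARD('d) * (5/2 + 2 * c)"
      by (rule long_count[OF fin _ _ assms(6) n0 c0 deg]) (auto simp: Lg_def)
    then show ?thesis by (intro add_mono mult_right_mono) auto
  qed
  also have "\<dots> \<le> 10 * c ^ 3 * real CARD('d) + 4"
  proof -
    have "(5/2 + 2 * c) * c\<^sup>2 \<le> 10 * c ^ 3"
    proof -
      have "5/2 + 2 * c \<le> 10 * c" using assms(2) by simp
      then have "(5/2 + 2 * c) * c\<^sup>2 \<le> 10 * c * c\<^sup>2" by (intro mult_right_mono) auto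
      then show ?thesis by (simp add: power2_eq_square power3_eq_cube mult_ac)
    qed
    then have "real CARD('d) * ((5/2 + 2 * c) * c\<^sup>2) \<le> real CARD('d) * (10 * c ^ 3)"
      by (intro mult_left_mono) auto
    then show ?thesis by (simp add: mult_ac)
  qed
  finally have lost: "(\<Sum>T\<in>X. tp V T) \<le> 10 * c ^ 3 * real CARD('d) + 4" .
  have "expected_triangles K V \<ge> \<Delta> * real n / 2"
    using split lost assms(8,9,10) by linarith
  with part1 show ?thesis unfolding K_def by blast
qed


end
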